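(* Let $N,d\in\mathbb{N}^*$, $\alpha>0$, $A\in\mathbb{R}_+^{N\times N}$, and let $\psi:\mathbb{R}_+\to\mathbb{R}_+$ satisfy $(r_1-r_2)(\psi(r_1)-\psi(r_2))\le0$ for all $r_1,r_2\ge0$ and $0<\psi(r)\le\psi(0)\le1$. Assume that for all $i\ne j$, $A_{ij}>0$ or $A_{ji}>0$ or there exists $k$ with $A_{ik}>0$ and $A_{jk}>0$ (scrambling). Consider solutions on $\mathbb{R}_+$ of $$\frac{dx_i}{dt}=v_i,\qquad\frac{dv_i}{dt}=\alpha\sum_{j\ne i}Q_t(i,j)(v_j-v_i)$$ with either (CS) $Q_t(i,j)=A_{ij}\psi(\|x_j(t)-x_i(t)\|_2)$, or (MT) $Q_t(i,j)=\dfrac{A_{ij}\psi(\|x_i(t)-x_j(t)\|_2)}{a_i+\sum_{k\ne i}A_{ik}\psi(\|x_i(t)-x_k(t)\|_2)}$, where $a\in\mathbb{R}_+^N$ satisfies $a_i>0$ whenever $A_{ij}=0$ for all $j\ne i$. Then the solution flocks provided $$V(0)<\alpha\chi(A)\int_{X(0)}^{+\infty}\psi(r)\,dr\quad\text{for (CS)},\qquad V(0)<\alpha\chi(B)\int_{X(0)}^{+\infty}\psi(r)\,dr\quad\text{for (MT)},$$ where $\chi(M)=\min_{i\ne j}\big(M_{ij}+M_{ji}+\sum_{k\ne i,j}M_{ik}\wedge M_{jk}\big)$ and $B_{ij}=\dfrac{A_{ij}}{a_i+\sum_{k\ne i}A_{ik}}$.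
   Context: $X(t)=\sup_{i,j}\|x_i(t)-x_j(t)\|_2$, $V(t)=\sup_{i,j}\|v_i(t)-v_j(t)\|_2$. Flocking means $\sup_{t\ge0}X(t)<+\infty$ and $V(t)\to0$ as $t\to+\infty$. $a\wedge b=\min(a,b)$. *)

theory Defs
  imports "HOL-Analysis.Analysis"
begin

(* Agents are indexed by 0..N-1; positions/velocities live in a Euclidean space 'a
   (dimension d = DIM('a) >= 1), norm = Euclidean 2-norm. *)

definition diamX :: "nat \<Rightarrow> (nat \<Rightarrow> real \<Rightarrow> 'a::euclidean_space) \<Rightarrow> real \<Rightarrow> real" where
  "diamX N x t = (SUP p\<in>{..<N}\<times>{..<N}. norm (x (fst p) t - x (snd p) t))"

definition chi :: "nat \<Rightarrow> (nat \<Rightarrow> nat \<Rightarrow> real) \<Rightarrow> real" where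
  "chi N M = Min {M i j + M j i + (\<Sum>k\<in>{..<N} - {i, j}. min (M i k) (M j k)) | i j. i < N \<and> j < N \<and> i \<noteq> j}"

definition B_mat :: "nat \<Rightarrow> (nat \<Rightarrow> nat \<Rightarrow> real) \<Rightarrow> (nat \<Rightarrow> real) \<Rightarrow> nat \<Rightarrow> nat \<Rightarrow> real" where
  "B_mat N A a i j = A i j / (a i + (\<Sum>k\<in>{..<N} - {i}. A i k))"

definition Q_CS :: "(nat \<Rightarrow> nat \<Rightarrow> real) \<Rightarrow> (real \<Rightarrow> real) \<Rightarrow> (nat \<Rightarrow> real \<Rightarrow> 'a::euclidean_space)
   \<Rightarrow> real \<Rightarrow> nat \<Rightarrow> nat \<Rightarrow> real" where
  "Q_CS A \<psi> x t i j = A i j * \<psi> (norm (x j t - x i t))"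

definition Q_MT :: "nat \<Rightarrow> (nat \<Rightarrow> nat \<Rightarrow> real) \<Rightarrow> (nat \<Rightarrow> real) \<Rightarrow> (real \<Rightarrow> real)
   \<Rightarrow> (nat \<Rightarrow> real \<Rightarrow> 'a::euclidean_space) \<Rightarrow> real \<Rightarrow> nat \<Rightarrow> nat \<Rightarrow> real" where
  "Q_MT N A a \<psi> x t i j = A i j * \<psi> (norm (x i t - x j t)) /
      (a i + (\<Sum>k\<in>{..<N} - {i}. A i k * \<psi> (norm (x i t - x k t))))"

definition is_solution :: "nat \<Rightarrow> real \<Rightarrow> (real \<Rightarrow> nat \<Rightarrow> nat \<Rightarrow> real)
   \<Rightarrow> (nat \<Rightarrow> real \<Rightarrow> 'a::euclidean_space) \<Rightarrow> (nat \<Rightarrow> real \<Rightarrow> 'a) \<Rightarrow> bool" where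
  "is_solution N \<alpha> Q x v \<longleftrightarrow>
     (\<forall>i<N. \<forall>t\<ge>0.
        (x i has_vector_derivative v i t) (at t within {0..}) \<and>
        (v i has_vector_derivative
           (\<alpha> *\<^sub>R (\<Sum>j\<in>{..<N} - {i}. Q t i j *\<^sub>R (v j t - v i t)))) (at t within {0..}))"

definition flocks :: "nat \<Rightarrow> (nat \<Rightarrow> real \<Rightarrow> 'a::euclidean_space) \<Rightarrow> (nat \<Rightarrow> real \<Rightarrow> 'a) \<Rightarrow> bool" where
  "flocks N x v \<longleftrightarrow> bdd_above (diamX N x ` {0..}) \<and> ((\<lambda>t. diamX N v t) \<longlongrightarrow> 0) at_top"

end

theory Submission
  imports Defs
begin


lemma dini_mono:
  fixes \<Phi> :: "real \<Rightarrow> real"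
  assumes cont: "continuous_on {0..} \<Phi>"
    and dini: "\<And>t e. t \<ge> 0 \<Longrightarrow> e > 0 \<Longrightarrow> eventually (\<lambda>h. \<Phi> (t+h) \<le> \<Phi> t + e*h) (at_right 0)"
    and a0: "0 \<le> a" and ab: "a \<le> b"
  shows "\<Phi> b \<le> \<Phi> a"
proof -
  have key: "\<Phi> b \<le> \<Phi> a + e*(b-a)" if e: "e>0" for e
  proof -
    define S where "S = {s \<in> {a..b}. \<Phi> s - e*(s-a) \<le> \<Phi> a}"
    have cab: "continuous_on {a..b} (\<lambda>s. \<Phi> s - e*(s-a))"
      by (intro continuous_intros continuous_on_subset[OF cont]) (use a0 in auto)
    have "closed S" unfolding S_def
      by (rule continuous_on_closed_Collect_le[OF cab]) (auto intro: continuous_intros)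
    moreover have "a \<in> S" using ab by (auto simp: S_def)
    moreover have "bdd_above S" by (auto simp: S_def bdd_above_def)
    ultimately have sS: "Sup S \<in> S" using closed_contains_Sup by blast
    define s where "s = Sup S"
    have "s = b"
    proof (rule ccontr)
      assume "s \<noteq> b"
      with sS have sb: "s < b" "a \<le> s" and Ps: "\<Phi> s - e*(s-a) \<le> \<Phi> a" by (auto simp: s_def S_def)
      have "s \<ge> 0" using a0 sb by auto
      from dini[OF this e] obtain d where d: "d > 0" "\<And>h. h > 0 \<Longrightarrow> h < d \<Longrightarrow> \<Phi> (s+h) \<le> \<Phi> s + e*h"
        unfolding eventually_at_right_field by auto
      define h where "h = min (d/2) (b-s)"
      have h: "h > 0" "h < d" "h \<le> b - s" using d sb by (auto simp: h_def)
      have "\<Phi> (s+h) - e*(s+h-a) \<le> \<Phi> a" using d(2)[OF h(1,2)] Ps by (simp add: algebra_simps)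
      then have "s + h \<in> S" using h sb by (auto simp: S_def)
      then have "s + h \<le> s" unfolding s_def by (rule cSup_upper) fact
      with h show False by auto
    qed
    with sS show ?thesis by (auto simp: S_def s_def)
  qed
  show ?thesis
  proof (rule field_le_epsilon)
    fix e :: real assume e: "e > 0"
    have "\<Phi> b \<le> \<Phi> a + (e/(b-a+1))*(b-a)" using key[of "e/(b-a+1)"] e ab by auto
    also have "(e/(b-a+1))*(b-a) \<le> e" using e ab by (simp add: field_simps)
    finally show "\<Phi> b \<le> \<Phi> a + e" by simp
  qed
qed

lemma vderiv_dini:
  fixes f :: "real \<Rightarrow> 'a::real_normed_vector"
  assumes "(f has_vector_derivative f') (at t within {0..})" "t \<ge> 0" "e > 0"
  shows "eventually (\<lambda>h. norm (f (t+h) - f t - h *\<^sub>R f') \<le> e*h) (at_right 0)"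
proof -
  from assms(1) obtain d where d: "d > 0" "\<And>y. y \<in> {0..} \<Longrightarrow> norm (y - t) < d \<Longrightarrow>
      norm (f y - f t - (y - t) *\<^sub>R f') \<le> e * norm (y - t)"
    unfolding has_vector_derivative_def has_derivative_within_alt using assms(3) by blast
  show ?thesis unfolding eventually_at_right_field
  proof (intro exI[of _ d] conjI allI impI)
    fix h :: real assume "h > 0" "h < d"
    then show "norm (f (t+h) - f t - h *\<^sub>R f') \<le> e*h" using d(2)[of "t+h"] assms(2) by auto
  qed (use d in auto)
qed

lemma rderiv_dini:
  fixes f :: "real \<Rightarrow> real"
  assumes "(f has_real_derivative f') (at t within {0..})" "t \<ge> 0" "e > 0"
  shows "eventually (\<lambda>h. f (t+h) \<le> f t + h * f' + e*h) (at_right 0)"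
proof -
  have "(f has_vector_derivative f') (at t within {0..})"
    using assms(1) by (simp add: has_real_derivative_iff_has_vector_derivative)
  from vderiv_dini[OF this assms(2,3)] show ?thesis
    by eventually_elim (auto simp: abs_le_iff algebra_simps)
qed

lemma norm_dini:
  fixes w :: "real \<Rightarrow> 'a::real_inner"
  assumes "(w has_vector_derivative w') (at t within {0..})" "t \<ge> 0" "e > 0" "w t \<noteq> 0"
  shows "eventually (\<lambda>h. norm (w (t+h)) \<le> norm (w t) + h * (inner (w t) w' / norm (w t)) + e*h) (at_right 0)"
proof -
  have "((\<lambda>s. norm (w s)) has_derivative (\<lambda>h. inner (h *\<^sub>R w') (sgn (w t)))) (at t within {0..})"
    using has_derivative_in_compose[OF assms(1)[unfolded has_vector_derivative_def]
        has_derivative_at_withinI[OF has_derivative_norm[OF assms(4)]]] by simp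
  then have "((\<lambda>s. norm (w s)) has_real_derivative (inner (w t) w' / norm (w t))) (at t within {0..})"
    unfolding has_field_derivative_def
    by (rule has_derivative_eq_rhs) (auto simp: sgn_div_norm inner_commute field_simps intro!: ext)
  from rderiv_dini[OF this assms(2,3)] show ?thesis .
qed

lemma continuous_on_Max_fam:
  fixes g :: "'p \<Rightarrow> 'b::topological_space \<Rightarrow> real"
  assumes "finite P" "P \<noteq> {}" "\<And>p. p \<in> P \<Longrightarrow> continuous_on S (g p)"
  shows "continuous_on S (\<lambda>t. Max ((\<lambda>p. g p t) ` P))"
  using assms
proof (induction P rule: finite_ne_induct)
  case (singleton x) then show ?case by simp
next
  case (insert x F)
  have "continuous_on S (\<lambda>t. max (g x t) (Max ((\<lambda>p. g p t) ` F)))"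
    using insert by (intro continuous_on_max) auto
  then show ?case using insert by simp
qed

lemma dini_Max:
  fixes g :: "'p \<Rightarrow> real \<Rightarrow> real"
  assumes P: "finite P" "P \<noteq> {}" and t: "t \<ge> 0" and e: "e > 0"
    and cont: "\<And>p. p \<in> P \<Longrightarrow> continuous_on {0..} (g p)"
    and act: "\<And>p. p \<in> P \<Longrightarrow> g p t = Max ((\<lambda>p. g p t) ` P) \<Longrightarrow>
        eventually (\<lambda>h. g p (t+h) \<le> g p t + h*D + e*h) (at_right 0)"
  shows "eventually (\<lambda>h. Max ((\<lambda>p. g p (t+h)) ` P) \<le> Max ((\<lambda>p. g p t) ` P) + h*D + e*h) (at_right 0)"
proof -
  define G where "G = Max ((\<lambda>p. g p t) ` P)"
  have each: "eventually (\<lambda>h. g p (t+h) \<le> G + h*D + e*h) (at_right 0)" if p: "p \<in> P" for p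
  proof (cases "g p t = G")
    case True then show ?thesis using act[OF p] by (simp add: G_def)
  next
    case False
    have "g p t \<le> G" unfolding G_def using P p by (intro Max_ge) auto
    with False have lt: "g p t < G" by auto
    define \<eta> where "\<eta> = G - g p t"
    have eta: "\<eta> > 0" using lt by (simp add: \<eta>_def)
    from cont[OF p] t eta obtain d where d: "d > 0" "\<And>x'. x' \<in> {0..} \<Longrightarrow> dist x' t < d \<Longrightarrow> dist (g p x') (g p t) < \<eta>/2"
      unfolding continuous_on_iff by (metis atLeast_iff half_gt_zero)
    show ?thesis unfolding eventually_at_right_field
    proof (intro exI[of _ "min d (\<eta>/(2*(\<bar>D\<bar>+1)))"] conjI allI impI)
      show "min d (\<eta> / (2 * (\<bar>D\<bar> + 1))) > 0" using d eta by auto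
      fix h :: real assume h: "h > 0" "h < min d (\<eta> / (2 * (\<bar>D\<bar> + 1)))"
      have "dist (g p (t+h)) (g p t) < \<eta>/2" using d(2)[of "t+h"] h t by (auto simp: dist_real_def)
      then have 1: "g p (t+h) < g p t + \<eta>/2" unfolding dist_real_def by linarith
      have "h * (2*(\<bar>D\<bar>+1)) < \<eta>" using h by (simp add: field_simps)
      then have "h*\<bar>D\<bar> \<le> \<eta>/2" using h by (simp add: algebra_simps)
      moreover have "h*D \<ge> h*(-\<bar>D\<bar>)" by (rule mult_left_mono) (use h in auto)
      ultimately have "h*D \<ge> -\<eta>/2" by simp
      moreover have "e*h > 0" using e h by simp
      ultimately show "g p (t+h) \<le> G + h*D + e*h" using 1 unfolding \<eta>_def by argo
    qed
  qed
  have "eventually (\<lambda>h. \<forall>p\<in>P. g p (t+h) \<le> G + h*D + e*h) (at_right 0)"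
    using each P(1) by (simp add: eventually_ball_finite)
  then show ?thesis
    by eventually_elim (use P in \<open>auto simp: G_def\<close>)
qed



lemma inner_core:
  fixes u :: "nat \<Rightarrow> 'a::real_inner" and Q M :: "nat \<Rightarrow> nat \<Rightarrow> real"
  assumes ij: "i < N" "j < N" "i \<noteq> j"
    and Vm: "norm (u i - u j) = Vm"
    and Vmax: "\<And>k l. k < N \<Longrightarrow> l < N \<Longrightarrow> norm (u k - u l) \<le> Vm"
    and QM: "\<And>k l. k < N \<Longrightarrow> l < N \<Longrightarrow> k \<noteq> l \<Longrightarrow> c * M k l \<le> Q k l"
    and c: "c \<ge> 0"
    and Mnn: "\<And>k l. k < N \<Longrightarrow> l < N \<Longrightarrow> k \<noteq> l \<Longrightarrow> 0 \<le> M k l"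
    and chi: "chv \<le> M i j + M j i + (\<Sum>k\<in>{..<N} - {i, j}. min (M i k) (M j k))"
  shows "inner (u i - u j) ((\<Sum>k\<in>{..<N}-{i}. Q i k *\<^sub>R (u k - u i)) - (\<Sum>k\<in>{..<N}-{j}. Q j k *\<^sub>R (u k - u j)))
          \<le> -(c*chv)*Vm^2"
proof -
  define w where "w = u i - u j"
  define p where "p k = inner w (u k)" for k
  define R where "R = {..<N} - {i, j}"
  have V2: "p i - p j = Vm^2"
  proof -
    have "p i - p j = inner w w" by (simp add: p_def w_def inner_diff_right)
    also have "\<dots> = (norm w)^2" by (simp add: power2_norm_eq_inner)
    finally show ?thesis using Vm by (simp add: w_def)
  qed
  have Vnn: "Vm \<ge> 0" using Vm by auto
  have pk: "p j \<le> p k \<and> p k \<le> p i" if k: "k < N" for k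
  proof
    have "p k - p j = inner w (u k - u j)" by (simp add: p_def inner_diff_right)
    also have "\<dots> \<le> norm w * norm (u k - u j)" by (rule norm_cauchy_schwarz)
    also have "\<dots> \<le> Vm * Vm" using Vmax[OF k ij(2)] Vm Vnn by (simp add: w_def mult_mono)
    finally show "p k \<le> p i" using V2 by (simp add: power2_eq_square)
    have "p i - p k = inner w (u i - u k)" by (simp add: p_def inner_diff_right)
    also have "\<dots> \<le> norm w * norm (u i - u k)" by (rule norm_cauchy_schwarz)
    also have "\<dots> \<le> Vm * Vm" using Vmax[OF ij(1) k] Vm Vnn by (simp add: w_def mult_mono)
    finally show "p j \<le> p k" using V2 by (simp add: power2_eq_square)
  qed
  have s1: "{..<N}-{i} = insert j R" "j \<notin> R" "{..<N}-{j} = insert i R" "i \<notin> R" "finite R"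
    using ij by (auto simp: R_def)
  have I1: "inner w (\<Sum>k\<in>{..<N}-{i}. Q i k *\<^sub>R (u k - u i)) = Q i j * (p j - p i) + (\<Sum>k\<in>R. Q i k * (p k - p i))"
    unfolding s1(1) using s1 by (simp add: inner_sum_right inner_diff_right inner_add_right p_def)
  have I2: "inner w (\<Sum>k\<in>{..<N}-{j}. Q j k *\<^sub>R (u k - u j)) = Q j i * (p i - p j) + (\<Sum>k\<in>R. Q j k * (p k - p j))"
    unfolding s1(3) using s1 by (simp add: inner_sum_right inner_diff_right inner_add_right p_def)
  have tm: "Q i k * (p k - p i) - Q j k * (p k - p j) \<le> - (c * min (M i k) (M j k)) * Vm^2" if k: "k \<in> R" for k
  proof -
    have kN: "k < N" "k \<noteq> i" "k \<noteq> j" using k by (auto simp: R_def)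
    define m where "m = c * min (M i k) (M j k)"
    have m1: "m \<le> Q i k" using QM[OF ij(1) kN(1)] kN c by (simp add: m_def) (meson min.cobounded1 mult_left_mono order_trans)
    have m2: "m \<le> Q j k" using QM[OF ij(2) kN(1)] kN c by (simp add: m_def) (meson min.cobounded2 mult_left_mono order_trans)
    have a: "p i - p k \<ge> 0" "p k - p j \<ge> 0" using pk[OF kN(1)] by auto
    have "m * (p i - p k) \<le> Q i k * (p i - p k)" by (rule mult_right_mono[OF m1 a(1)])
    moreover have "m * (p k - p j) \<le> Q j k * (p k - p j)" by (rule mult_right_mono[OF m2 a(2)])
    ultimately have "Q i k * (p k - p i) - Q j k * (p k - p j) \<le> - m * ((p i - p k) + (p k - p j))"
      by (simp add: algebra_simps)
    then show ?thesis using V2 by (simp add: m_def)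
  qed
  have Qij: "c * M i j \<le> Q i j" "c * M j i \<le> Q j i" using QM ij by auto
  have "inner (u i - u j) ((\<Sum>k\<in>{..<N}-{i}. Q i k *\<^sub>R (u k - u i)) - (\<Sum>k\<in>{..<N}-{j}. Q j k *\<^sub>R (u k - u j)))
     = - (Q i j + Q j i) * Vm^2 + (\<Sum>k\<in>R. Q i k * (p k - p i) - Q j k * (p k - p j))"
  proof -
    have d1: "p j - p i = -(Vm^2)" "p i - p j = Vm^2" using V2 by auto
    have "inner (u i - u j) ((\<Sum>k\<in>{..<N}-{i}. Q i k *\<^sub>R (u k - u i)) - (\<Sum>k\<in>{..<N}-{j}. Q j k *\<^sub>R (u k - u j)))
       = (Q i j * (p j - p i) + (\<Sum>k\<in>R. Q i k * (p k - p i))) - (Q j i * (p i - p j) + (\<Sum>k\<in>R. Q j k * (p k - p j)))"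
      unfolding inner_diff_right w_def[symmetric] I1 I2 by simp
    also have "\<dots> = - (Q i j + Q j i) * Vm^2 + ((\<Sum>k\<in>R. Q i k * (p k - p i)) - (\<Sum>k\<in>R. Q j k * (p k - p j)))"
      unfolding d1 by (simp add: algebra_simps)
    finally show ?thesis by (simp only: sum_subtractf)
  qed
  also have "\<dots> \<le> - (c * M i j + c * M j i) * Vm^2 + (\<Sum>k\<in>R. - (c * min (M i k) (M j k)) * Vm^2)"
    apply (intro add_mono sum_mono tm)
    using Qij by (auto intro!: mult_right_mono)
  also have "\<dots> = - c * (M i j + M j i + (\<Sum>k\<in>R. min (M i k) (M j k))) * Vm^2"
    by (simp add: sum_distrib_left sum_distrib_right algebra_simps sum_negf)
  also have "\<dots> \<le> -(c*chv)*Vm^2"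
    using chi c by (simp add: R_def mult_left_mono mult_right_mono)
  finally show ?thesis .
qed



definition EI :: "(real \<Rightarrow> real) \<Rightarrow> real \<Rightarrow> real \<Rightarrow> ennreal" where
  "EI \<psi> a b = (\<integral>\<^sup>+ r. ennreal (\<psi> r) * indicator {a..<b} r \<partial>lborel)"

definition Psi :: "(real \<Rightarrow> real) \<Rightarrow> real \<Rightarrow> real" where
  "Psi \<psi> y = enn2real (EI \<psi> 0 y)"

lemma psi_meas:
  fixes \<psi> :: "real \<Rightarrow> real"
  assumes anti: "\<And>r1 r2. 0 \<le> r1 \<Longrightarrow> r1 \<le> r2 \<Longrightarrow> \<psi> r2 \<le> \<psi> r1"
    and A: "A \<subseteq> {0..}" "A \<in> sets borel"
  shows "(\<lambda>r. ennreal (\<psi> r) * indicator A r) \<in> borel_measurable lborel"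
proof -
  define \<phi> where "\<phi> r = - \<psi> (max r 0)" for r
  have "mono \<phi>" unfolding mono_def \<phi>_def using anti by (auto simp: max_def)
  then have m: "\<phi> \<in> borel_measurable borel" by (rule borel_measurable_mono)
  have m2: "(\<lambda>r. ennreal (- \<phi> r) * indicator A r) \<in> borel_measurable lborel"
    using m A(2) by measurable
  show ?thesis
  proof (rule measurable_cong[THEN iffD1, OF _ m2])
    fix r :: real assume "r \<in> space lborel"
    show "ennreal (- \<phi> r) * indicator A r = ennreal (\<psi> r) * indicator A r"
      using A(1) by (cases "r \<in> A") (auto simp: \<phi>_def)
  qed
qed

context
  fixes \<psi> :: "real \<Rightarrow> real"
  assumes anti: "\<And>r1 r2. 0 \<le> r1 \<Longrightarrow> r1 \<le> r2 \<Longrightarrow> \<psi> r2 \<le> \<psi> r1"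
    and pos: "\<And>r. 0 \<le> r \<Longrightarrow> 0 < \<psi> r"
    and p0: "\<psi> 0 \<le> 1"
begin

lemma EI_le: assumes "0 \<le> a" "a \<le> b" shows "EI \<psi> a b \<le> ennreal (\<psi> a * (b-a))"
proof -
  have "EI \<psi> a b \<le> (\<integral>\<^sup>+ r. ennreal (\<psi> a) * indicator {a..<b} r \<partial>lborel)"
    unfolding EI_def
    by (intro nn_integral_mono) (auto simp: indicator_def intro!: ennreal_leI anti assms)
  also have "\<dots> = ennreal (\<psi> a) * ennreal (b - a)" by (simp add: nn_integral_cmult_indicator assms)
  also have "\<dots> = ennreal (\<psi> a * (b-a))" using assms pos[of a] by (simp add: ennreal_mult)
  finally show ?thesis .
qed

lemma EI_fin: assumes "0 \<le> a" "a \<le> b" shows "EI \<psi> a b < top"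
  using EI_le[OF assms] by (simp add: le_less_trans)

lemma EI_add: assumes "0 \<le> a" "a \<le> b" "b \<le> c" shows "EI \<psi> a c = EI \<psi> a b + EI \<psi> b c"
proof -
  have "EI \<psi> a c = (\<integral>\<^sup>+ r. ennreal (\<psi> r) * indicator {a..<b} r + ennreal (\<psi> r) * indicator {b..<c} r \<partial>lborel)"
    unfolding EI_def using assms
    by (intro nn_integral_cong) (auto simp: indicator_def)
  also have "\<dots> = EI \<psi> a b + EI \<psi> b c"
    unfolding EI_def using assms
    by (intro nn_integral_add psi_meas[OF anti]) auto
  finally show ?thesis .
qed

lemma EI_mono: assumes "b \<le> c" shows "EI \<psi> a b \<le> EI \<psi> a c"
  unfolding EI_def using assms
  by (intro nn_integral_mono) (auto simp: indicator_def)

lemma Psi_diff: assumes "0 \<le> y" "y \<le> y'" shows "Psi \<psi> y' = Psi \<psi> y + enn2real (EI \<psi> y y')"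
  unfolding Psi_def using assms EI_add[of 0 y y'] EI_fin[of 0 y] EI_fin[of y y']
  by (simp add: enn2real_plus)

lemma Psi_diff_le: assumes "0 \<le> y" "y \<le> y'" shows "Psi \<psi> y' \<le> Psi \<psi> y + \<psi> y * (y' - y)"
proof -
  have "enn2real (EI \<psi> y y') \<le> enn2real (ennreal (\<psi> y * (y'-y)))"
    by (rule enn2real_mono[OF EI_le[OF assms]]) simp
  also have "\<dots> = \<psi> y * (y' - y)" using assms pos[of y] by simp
  finally show ?thesis using Psi_diff[OF assms] by simp
qed

lemma Psi_mono: assumes "0 \<le> y" "y \<le> y'" shows "Psi \<psi> y \<le> Psi \<psi> y'"
  using Psi_diff[OF assms] by simp

lemma Psi_step: assumes "0 \<le> y" "0 \<le> y'" "y' \<le> y + d" "0 \<le> d"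
  shows "Psi \<psi> y' \<le> Psi \<psi> y + \<psi> y * d"
proof (cases "y \<le> y'")
  case True
  have "Psi \<psi> y' \<le> Psi \<psi> y + \<psi> y * (y' - y)" by (rule Psi_diff_le[OF assms(1) True])
  also have "\<psi> y * (y' - y) \<le> \<psi> y * d" using assms pos[of y] by (intro mult_left_mono) auto
  finally show ?thesis by simp
next
  case False
  then have "Psi \<psi> y' \<le> Psi \<psi> y" using Psi_mono[OF assms(2)] by simp
  moreover have "0 \<le> \<psi> y * d" using assms pos[of y] by simp
  ultimately show ?thesis by simp
qed

lemma Psi_lip: assumes "0 \<le> y" "0 \<le> y'" shows "\<bar>Psi \<psi> y' - Psi \<psi> y\<bar> \<le> \<bar>y' - y\<bar>"
proof -
  have *: "Psi \<psi> b - Psi \<psi> a \<le> b - a \<and> Psi \<psi> a \<le> Psi \<psi> b" if "0 \<le> a" "a \<le> b" for a b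
  proof
    have "\<psi> a \<le> 1" using anti[of 0 a] p0 that by simp
    then have "\<psi> a * (b - a) \<le> 1 * (b - a)" using that by (intro mult_right_mono) auto
    then show "Psi \<psi> b - Psi \<psi> a \<le> b - a" using Psi_diff_le[OF that] by simp
    show "Psi \<psi> a \<le> Psi \<psi> b" by (rule Psi_mono[OF that])
  qed
  show ?thesis
  proof (cases "y \<le> y'")
    case True then show ?thesis using *[OF assms(1) True] by auto
  next
    case False then show ?thesis using *[OF assms(2)] by auto
  qed
qed

lemma Psi_cont: "continuous_on {0..} (Psi \<psi>)"
  unfolding continuous_on_iff
proof (intro ballI allI impI)
  fix x e :: real assume x: "x \<in> {0..}" and e: "e > 0"
  show "\<exists>d>0. \<forall>x'\<in>{0..}. dist x' x < d \<longrightarrow> dist (Psi \<psi> x') (Psi \<psi> x) < e"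
    using Psi_lip x e by (intro exI[of _ e]) (force simp: dist_real_def)
qed

lemma EI_SUP: assumes "0 \<le> a"
  shows "(\<integral>\<^sup>+ r\<in>{a..}. ennreal (\<psi> r) \<partial>lborel) = (SUP n. EI \<psi> a (a + real n))"
proof -
  have "(\<integral>\<^sup>+ r\<in>{a..}. ennreal (\<psi> r) \<partial>lborel) = (\<integral>\<^sup>+ r. (SUP n. ennreal (\<psi> r) * indicator {a..<a + real n} r) \<partial>lborel)"
  proof (intro nn_integral_cong)
    fix r :: real
    show "ennreal (\<psi> r) * indicator {a..} r = (SUP n. ennreal (\<psi> r) * indicator {a..<a + real n} r)"
    proof (rule antisym)
      show "(SUP n. ennreal (\<psi> r) * indicator {a..<a + real n} r) \<le> ennreal (\<psi> r) * indicator {a..} r"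
        by (intro SUP_least) (auto simp: indicator_def)
      obtain n :: nat where n: "r - a < real n" using reals_Archimedean2 by blast
      have "ennreal (\<psi> r) * indicator {a..} r = ennreal (\<psi> r) * indicator {a..<a + real n} r"
        using n by (auto simp: indicator_def)
      also have "\<dots> \<le> (SUP n. ennreal (\<psi> r) * indicator {a..<a + real n} r)" by (rule SUP_upper) simp
      finally show "ennreal (\<psi> r) * indicator {a..} r \<le> (SUP n. ennreal (\<psi> r) * indicator {a..<a + real n} r)" .
    qed
  qed
  also have "\<dots> = (SUP n. EI \<psi> a (a + real n))"
    unfolding EI_def
  proof (rule nn_integral_monotone_convergence_SUP)
    show "incseq (\<lambda>n r. ennreal (\<psi> r) * indicator {a..<a + real n} r)"
      by (intro incseq_SucI le_funI) (auto simp: indicator_def)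
    show "\<And>n. (\<lambda>r. ennreal (\<psi> r) * indicator {a..<a + real n} r) \<in> borel_measurable lborel"
      using assms by (intro psi_meas[OF anti]) auto
  qed
  finally show ?thesis .
qed

end


lemma norm_step:
  fixes a b c :: "'a::real_normed_vector"
  assumes "norm (a - b - c) \<le> e" shows "norm a \<le> norm b + norm c + e"
proof -
  have "norm a \<le> norm (b + c) + norm (a - b - c)" using norm_triangle_ineq[of "b+c" "a-b-c"] by simp
  moreover have "norm (b + c) \<le> norm b + norm c" by (rule norm_triangle_ineq)
  ultimately show ?thesis using assms by simp
qed

lemma core:
  fixes x v :: "nat \<Rightarrow> real \<Rightarrow> 'a::euclidean_space" and Q :: "real \<Rightarrow> nat \<Rightarrow> nat \<Rightarrow> real"
    and M :: "nat \<Rightarrow> nat \<Rightarrow> real" and \<psi> :: "real \<Rightarrow> real"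
  assumes N1: "N \<ge> 1" and alpha: "\<alpha> > 0" and chv: "chv > 0"
    and anti: "\<And>r1 r2. 0 \<le> r1 \<Longrightarrow> r1 \<le> r2 \<Longrightarrow> \<psi> r2 \<le> \<psi> r1"
    and pos: "\<And>r. 0 \<le> r \<Longrightarrow> 0 < \<psi> r"
    and p0: "\<psi> 0 \<le> 1"
    and chi: "\<And>i j. i<N \<Longrightarrow> j<N \<Longrightarrow> i\<noteq>j \<Longrightarrow> chv \<le> M i j + M j i + (\<Sum>k\<in>{..<N}-{i,j}. min (M i k) (M j k))"
    and Mnn: "\<And>i j. i<N \<Longrightarrow> j<N \<Longrightarrow> i\<noteq>j \<Longrightarrow> 0 \<le> M i j"
    and QM: "\<And>t i j. t \<ge> 0 \<Longrightarrow> i<N \<Longrightarrow> j<N \<Longrightarrow> i\<noteq>j \<Longrightarrow> \<psi> (diamX N x t) * M i j \<le> Q t i j"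
    and sol: "is_solution N \<alpha> Q x v"
    and hyp: "ennreal (diamX N v 0) < ennreal (\<alpha> * chv) * (\<integral>\<^sup>+ r\<in>{diamX N x 0..}. ennreal (\<psi> r) \<partial>lborel)"
  shows "flocks N x v"
proof -
  define P where "P = {..<N} \<times> {..<N}"
  define V where "V t = diamX N v t" for t
  define X where "X t = diamX N x t" for t
  define K where "K = \<alpha> * chv"
  define F where "F i t = \<alpha> *\<^sub>R (\<Sum>j\<in>{..<N}-{i}. Q t i j *\<^sub>R (v j t - v i t))" for i t
  have K: "K > 0" using alpha chv by (simp add: K_def)
  have "(0,0) \<in> P" using N1 by (simp add: P_def)
  then have P: "finite P" "P \<noteq> {}" by (auto simp: P_def)
  have dx: "\<And>i t. i<N \<Longrightarrow> t\<ge>0 \<Longrightarrow> (x i has_vector_derivative v i t) (at t within {0..})"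
   and dv: "\<And>i t. i<N \<Longrightarrow> t\<ge>0 \<Longrightarrow> (v i has_vector_derivative F i t) (at t within {0..})"
    using sol unfolding is_solution_def F_def by auto
  have diam_Max: "diamX N f t = Max ((\<lambda>p. norm (f (fst p) t - f (snd p) t)) ` P)" for f :: "nat \<Rightarrow> real \<Rightarrow> 'a" and t
    unfolding diamX_def P_def[symmetric] using P by (intro cSup_eq_Max) auto
  have diam_ge: "norm (f i t - f j t) \<le> diamX N f t" if "i<N" "j<N" for f :: "nat \<Rightarrow> real \<Rightarrow> 'a" and t i j
  proof -
    have "(i,j) \<in> P" using that by (simp add: P_def)
    then have "norm (f i t - f j t) \<in> (\<lambda>p. norm (f (fst p) t - f (snd p) t)) ` P" by force
    then show ?thesis unfolding diam_Max using P by (intro Max_ge) auto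
  qed
  have diam_nn: "0 \<le> diamX N f t" for f :: "nat \<Rightarrow> real \<Rightarrow> 'a" and t
    using diam_ge[of 0 0 f t] N1 by simp
  have diam_cont: "continuous_on {0..} (diamX N f)" if fc: "\<And>i. i<N \<Longrightarrow> continuous_on {0..} (f i)"
    for f :: "nat \<Rightarrow> real \<Rightarrow> 'a"
  proof -
    have "diamX N f = (\<lambda>t. Max ((\<lambda>p. norm (f (fst p) t - f (snd p) t)) ` P))" by (rule ext) (rule diam_Max)
    moreover have "continuous_on {0..} (\<lambda>t. Max ((\<lambda>p. norm (f (fst p) t - f (snd p) t)) ` P))"
      using P fc by (intro continuous_on_Max_fam) (auto simp: P_def intro!: continuous_intros)
    ultimately show ?thesis by simp
  qed
  have xc: "continuous_on {0..} (x i)" if "i<N" for i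
    unfolding continuous_on_eq_continuous_within
  proof
    fix t :: real assume "t \<in> {0..}"
    then show "continuous (at t within {0..}) (x i)" by (intro has_vector_derivative_continuous[OF dx] that) auto
  qed
  have vc: "continuous_on {0..} (v i)" if "i<N" for i
    unfolding continuous_on_eq_continuous_within
  proof
    fix t :: real assume "t \<in> {0..}"
    then show "continuous (at t within {0..}) (v i)" by (intro has_vector_derivative_continuous[OF dv] that) auto
  qed
  have Vc: "continuous_on {0..} V" using diam_cont[OF vc] by (simp add: V_def[abs_def])
  have Xc: "continuous_on {0..} X" using diam_cont[OF xc] by (simp add: X_def[abs_def])
  have Vnn: "0 \<le> V t" for t by (simp add: V_def diam_nn)
  have Xnn: "0 \<le> X t" for t by (simp add: X_def diam_nn)
  have gc: "continuous_on {0..} (\<lambda>s. norm (f (fst p) s - f (snd p) s))"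
    if "p \<in> P" "\<And>i. i<N \<Longrightarrow> continuous_on {0..} (f i)" for p and f :: "nat \<Rightarrow> real \<Rightarrow> 'a"
    using that by (auto simp: P_def intro!: continuous_intros)

  have Xdini: "eventually (\<lambda>h. X (t+h) \<le> X t + h * V t + e*h) (at_right 0)" if t: "t\<ge>0" and e: "e>0" for t e
  proof -
    have "eventually (\<lambda>h. Max ((\<lambda>p. norm (x (fst p) (t+h) - x (snd p) (t+h))) ` P)
        \<le> Max ((\<lambda>p. norm (x (fst p) t - x (snd p) t)) ` P) + h * V t + e*h) (at_right 0)"
    proof (rule dini_Max[OF P t e])
      fix p assume p: "p \<in> P"
      then show "continuous_on {0..} (\<lambda>s. norm (x (fst p) s - x (snd p) s))" using gc xc by blast
      obtain i j where ij: "p = (i,j)" "i<N" "j<N" using p by (auto simp: P_def)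
      have d: "((\<lambda>s. x i s - x j s) has_vector_derivative (v i t - v j t)) (at t within {0..})"
        using dx[OF ij(2) t] dx[OF ij(3) t] by (rule has_vector_derivative_diff)
      show "eventually (\<lambda>h. norm (x (fst p) (t+h) - x (snd p) (t+h)) \<le> norm (x (fst p) t - x (snd p) t) + h * V t + e*h) (at_right 0)"
        using vderiv_dini[OF d t e] eventually_at_right_less[of 0]
      proof eventually_elim
        case (elim h)
        have "norm (x i (t+h) - x j (t+h)) \<le> norm (x i t - x j t) + norm (h *\<^sub>R (v i t - v j t)) + e*h"
          by (rule norm_step) (use elim in \<open>simp add: algebra_simps\<close>)
        also have "norm (h *\<^sub>R (v i t - v j t)) = h * norm (v i t - v j t)" using elim by simp
        also have "\<dots> \<le> h * V t" using elim diam_ge[OF ij(2,3), of v t] by (intro mult_left_mono) (auto simp: V_def)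
        finally show ?case using ij by simp
      qed
    qed
    then show ?thesis unfolding X_def diam_Max .
  qed

  have Vdini: "eventually (\<lambda>h. V (t+h) \<le> V t + h * (-(K * \<psi> (X t)) * V t) + e*h) (at_right 0)"
    if t: "t\<ge>0" and e: "e>0" for t e
  proof -
    define D where "D = -(K * \<psi> (X t)) * V t"
    have "eventually (\<lambda>h. Max ((\<lambda>p. norm (v (fst p) (t+h) - v (snd p) (t+h))) ` P)
        \<le> Max ((\<lambda>p. norm (v (fst p) t - v (snd p) t)) ` P) + h * D + e*h) (at_right 0)"
    proof (rule dini_Max[OF P t e])
      fix p assume p: "p \<in> P"
      then show "continuous_on {0..} (\<lambda>s. norm (v (fst p) s - v (snd p) s))" using gc vc by blast
      assume act: "norm (v (fst p) t - v (snd p) t) = Max ((\<lambda>p. norm (v (fst p) t - v (snd p) t)) ` P)"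
      obtain i j where ij: "p = (i,j)" "i<N" "j<N" using p by (auto simp: P_def)
      have act': "norm (v i t - v j t) = V t" using act ij by (simp add: V_def diam_Max)
      have d: "((\<lambda>s. v i s - v j s) has_vector_derivative (F i t - F j t)) (at t within {0..})"
        using dv[OF ij(2) t] dv[OF ij(3) t] by (rule has_vector_derivative_diff)
      show "eventually (\<lambda>h. norm (v (fst p) (t+h) - v (snd p) (t+h)) \<le> norm (v (fst p) t - v (snd p) t) + h * D + e*h) (at_right 0)"
      proof (cases "V t = 0")
        case True
        have eq: "v k t = v l t" if "k<N" "l<N" for k l
          using diam_ge[OF that, of v t] True by (simp add: V_def)
        have F0: "F k t = 0" if "k<N" for k
        proof -
          have "(\<Sum>j\<in>{..<N}-{k}. Q t k j *\<^sub>R (v j t - v k t)) = 0"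
          proof (rule sum.neutral, rule ballI)
            fix j assume "j \<in> {..<N}-{k}"
            then have "v j t = v k t" using eq[of j k] that by auto
            then show "Q t k j *\<^sub>R (v j t - v k t) = 0" by simp
          qed
          then show ?thesis by (simp add: F_def)
        qed
        have w0: "v i t - v j t = 0" using eq[of i j] ij by simp
        show ?thesis
          using vderiv_dini[OF d t e]
        proof eventually_elim
          case (elim h)
          have "norm (v i (t+h) - v j (t+h)) \<le> e*h" using elim F0[OF ij(2)] F0[OF ij(3)] w0 by (simp add: algebra_simps)
          then show ?case using ij True w0 by (simp add: D_def)
        qed
      next
        case False
        then have Vpos: "V t > 0" using Vnn[of t] by simp
        then have w0: "v i t - v j t \<noteq> 0" using act' by auto
        then have "i \<noteq> j" by auto
        have inner_le: "inner (v i t - v j t) (F i t - F j t) \<le> \<alpha> * (-(\<psi> (X t) * chv) * (V t)^2)"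
        proof -
          have "inner (v i t - v j t) ((\<Sum>k\<in>{..<N}-{i}. Q t i k *\<^sub>R (v k t - v i t)) - (\<Sum>k\<in>{..<N}-{j}. Q t j k *\<^sub>R (v k t - v j t)))
              \<le> -(\<psi> (X t) * chv) * (V t)^2"
          proof (rule inner_core[where M=M])
            show "i < N" "j < N" "i \<noteq> j" by fact+
            show "norm (v i t - v j t) = V t" by fact
            show "norm (v k t - v l t) \<le> V t" if "k < N" "l < N" for k l using diam_ge[OF that] by (simp add: V_def)
            show "\<psi> (X t) * M k l \<le> Q t k l" if "k < N" "l < N" "k \<noteq> l" for k l using QM[OF t that] by (simp add: X_def)
            show "0 \<le> \<psi> (X t)" using pos[OF Xnn[of t]] by simp
            show "0 \<le> M k l" if "k < N" "l < N" "k \<noteq> l" for k l using Mnn[OF that] .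
            show "chv \<le> M i j + M j i + (\<Sum>k\<in>{..<N} - {i, j}. min (M i k) (M j k))" using chi ij \<open>i\<noteq>j\<close> by auto
          qed
          then have "\<alpha> * inner (v i t - v j t) ((\<Sum>k\<in>{..<N}-{i}. Q t i k *\<^sub>R (v k t - v i t)) - (\<Sum>k\<in>{..<N}-{j}. Q t j k *\<^sub>R (v k t - v j t)))
              \<le> \<alpha> * (-(\<psi> (X t) * chv) * (V t)^2)" using alpha by (intro mult_left_mono) auto
          then show ?thesis unfolding F_def scaleR_diff_right[symmetric] inner_scaleR_right by simp
        qed
        have Dle: "inner (v i t - v j t) (F i t - F j t) / norm (v i t - v j t) \<le> D"
        proof -
          have "inner (v i t - v j t) (F i t - F j t) / norm (v i t - v j t) \<le> \<alpha> * (-(\<psi> (X t) * chv) * (V t)^2) / V t"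
            unfolding act' using inner_le Vpos by (intro divide_right_mono) auto
          also have "\<dots> = D" using Vpos by (simp add: D_def K_def power2_eq_square)
          finally show ?thesis .
        qed
        show ?thesis
          using norm_dini[OF d t e w0] eventually_at_right_less[of 0]
        proof eventually_elim
          case (elim h)
          have "h * (inner (v i t - v j t) (F i t - F j t) / norm (v i t - v j t)) \<le> h * D"
            using elim Dle by (intro mult_left_mono) auto
          then show ?case using elim ij by simp
        qed
      qed
    qed
    then show ?thesis unfolding V_def diam_Max D_def .
  qed

  have psiX: "0 \<le> \<psi> (X t)" "\<psi> (X t) \<le> 1" for t
    using pos[OF Xnn[of t]] anti[OF order_refl Xnn[of t]] p0 by auto
  define \<Phi> where "\<Phi> t = V t + K * Psi \<psi> (X t)" for t
  have Psic: "continuous_on {0..} (Psi \<psi>)" by (rule Psi_cont[of \<psi>, OF anti pos p0])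
  have \<Phi>c: "continuous_on {0..} \<Phi>"
  proof -
    have "continuous_on {0..} (\<lambda>t. Psi \<psi> (X t))"
      by (rule continuous_on_compose2[OF Psic Xc]) (auto simp: Xnn)
    then show ?thesis unfolding \<Phi>_def[abs_def] by (intro continuous_intros Vc)
  qed
  have \<Phi>dini: "eventually (\<lambda>h. \<Phi> (t+h) \<le> \<Phi> t + e*h) (at_right 0)" if t: "t\<ge>0" and e: "e>0" for t e
  proof -
    define e1 where "e1 = e / (1 + K)"
    have e1: "e1 > 0" using e K by (auto simp: e1_def)
    have "e1 + K * e1 = e1 * (1 + K)" by (simp add: algebra_simps)
    also have "\<dots> = e" using K by (simp add: e1_def)
    finally have e1': "e1 + K * e1 = e" .
    show ?thesis
      using Xdini[OF t e1] Vdini[OF t e1] eventually_at_right_less[of 0]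
    proof eventually_elim
      case (elim h)
      have B: "Psi \<psi> (X (t+h)) \<le> Psi \<psi> (X t) + \<psi> (X t) * (h * V t + e1 * h)"
        using elim e1 Vnn[of t] by (intro Psi_step[of \<psi>, OF anti pos p0] Xnn) auto
      have "K * Psi \<psi> (X (t+h)) \<le> K * (Psi \<psi> (X t) + \<psi> (X t) * (h * V t + e1 * h))"
        using B K by (intro mult_left_mono) auto
      also have "\<dots> = K * Psi \<psi> (X t) + (K * \<psi> (X t)) * V t * h + K * \<psi> (X t) * (e1 * h)"
        by (simp add: algebra_simps)
      also have "K * \<psi> (X t) * (e1 * h) \<le> K * 1 * (e1 * h)"
        using psiX[of t] K e1 elim by (intro mult_right_mono mult_left_mono) auto
      finally have KB: "K * Psi \<psi> (X (t+h)) \<le> K * Psi \<psi> (X t) + (K * \<psi> (X t)) * V t * h + K * (e1 * h)" by simp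
      have A: "V (t+h) \<le> V t - (K * \<psi> (X t)) * V t * h + e1*h" using elim(2) by (simp add: algebra_simps)
      have "e1 * h + K * (e1 * h) = e * h" using e1' by (metis distrib_right mult.assoc)
      then show ?case using A KB unfolding \<Phi>_def by linarith
    qed
  qed
  have \<Phi>mono: "\<Phi> t \<le> \<Phi> 0" if "t \<ge> 0" for t
    by (rule dini_mono[OF \<Phi>c \<Phi>dini]) (use that in auto)
  have X0: "0 \<le> X 0" by (rule Xnn)
  have "ennreal (V 0) < ennreal K * (SUP n. EI \<psi> (X 0) (X 0 + real n))"
    using hyp EI_SUP[of \<psi>, OF anti pos p0 X0] by (simp add: V_def X_def K_def)
  then obtain n :: nat where n: "ennreal (V 0) < ennreal K * EI \<psi> (X 0) (X 0 + real n)"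
    unfolding SUP_mult_left_ennreal less_SUP_iff by blast
  define Xm where "Xm = X 0 + real n"
  have Xbound: "X t < Xm" if t: "t \<ge> 0" for t
  proof (rule ccontr)
    assume "\<not> X t < Xm"
    then have Xt: "Xm \<le> X t" by simp
    have le0: "X 0 \<le> X t" using Xt by (simp add: Xm_def)
    have fin: "EI \<psi> (X 0) (X t) < top" by (rule EI_fin[of \<psi>, OF anti pos p0 X0 le0])
    have "K * (Psi \<psi> (X t) - Psi \<psi> (X 0)) \<le> V 0"
      using \<Phi>mono[OF t] Vnn[of t] by (simp add: \<Phi>_def algebra_simps)
    then have r: "K * enn2real (EI \<psi> (X 0) (X t)) \<le> V 0"
      using Psi_diff[of \<psi>, OF anti pos p0 X0 le0] by simp
    have "ennreal K * EI \<psi> (X 0) Xm \<le> ennreal K * EI \<psi> (X 0) (X t)"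
      by (intro mult_left_mono EI_mono[of \<psi>, OF anti pos p0] Xt) auto
    also have "\<dots> = ennreal K * ennreal (enn2real (EI \<psi> (X 0) (X t)))" using fin by simp
    also have "\<dots> = ennreal (K * enn2real (EI \<psi> (X 0) (X t)))" using K by (simp add: ennreal_mult)
    also have "\<dots> \<le> ennreal (V 0)" using r by (simp add: ennreal_leI)
    finally show False using n by (simp add: Xm_def)
  qed
  have bdd: "bdd_above (diamX N x ` {0..})"
    unfolding bdd_above_def using Xbound by (intro exI[of _ Xm]) (auto simp: X_def less_imp_le)
  have Vmono: "V b \<le> V a" if "0 \<le> a" "a \<le> b" for a b
  proof (rule dini_mono[OF Vc _ that])
    fix t e :: real assume t: "t \<ge> 0" and e: "e > 0"
    show "eventually (\<lambda>h. V (t+h) \<le> V t + e*h) (at_right 0)"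
      using Vdini[OF t e] eventually_at_right_less[of 0]
    proof eventually_elim
      case (elim h)
      have "0 \<le> h * ((K * \<psi> (X t)) * V t)" using elim K psiX[of t] Vnn[of t] by simp
      then show ?case using elim by (simp add: algebra_simps)
    qed
  qed
  have Xm0: "0 \<le> Xm" using X0 by (simp add: Xm_def)
  define c where "c = K * \<psi> Xm"
  have c: "c > 0" using K pos[OF Xm0] by (simp add: c_def)
  have small: "\<exists>T\<ge>0. V T < e" if e: "e > 0" for e
  proof (rule ccontr)
    assume "\<not> (\<exists>T\<ge>0. V T < e)"
    then have ge: "e \<le> V t" if "t \<ge> 0" for t using that by force
    define \<Phi>3 where "\<Phi>3 t = V t + c * e * t" for t
    have \<Phi>3c: "continuous_on {0..} \<Phi>3" unfolding \<Phi>3_def[abs_def] by (intro continuous_intros Vc)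
    have \<Phi>3dini: "eventually (\<lambda>h. \<Phi>3 (t+h) \<le> \<Phi>3 t + e'*h) (at_right 0)" if t: "t\<ge>0" and e': "e'>0" for t e'
      using Vdini[OF t e'] eventually_at_right_less[of 0]
    proof eventually_elim
      case (elim h)
      have "\<psi> Xm \<le> \<psi> (X t)" using Xbound[OF t] by (intro anti Xnn) auto
      then have "c \<le> K * \<psi> (X t)" using K by (simp add: c_def)
      then have "c * e \<le> (K * \<psi> (X t)) * V t" using ge[OF t] c e by (intro mult_mono) auto
      then have hce: "h * (c * e) \<le> h * ((K * \<psi> (X t)) * V t)" using elim by (intro mult_left_mono) auto
      have A: "V (t+h) \<le> V t - h * ((K * \<psi> (X t)) * V t) + e'*h" using elim(1) by (simp add: algebra_simps)
      have "\<Phi>3 (t+h) = V (t+h) + c*e*t + h*(c*e)" by (simp add: \<Phi>3_def algebra_simps)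
      then show ?case using A hce unfolding \<Phi>3_def by linarith
    qed
    define T where "T = V 0 / (c * e) + 1"
    have T: "T \<ge> 0" using Vnn[of 0] c e by (simp add: T_def)
    have "\<Phi>3 T \<le> \<Phi>3 0" by (rule dini_mono[OF \<Phi>3c \<Phi>3dini]) (use T in auto)
    then have "V T + c * e * T \<le> V 0" by (simp add: \<Phi>3_def)
    moreover have "c * e * T = V 0 + c * e" using c e by (simp add: T_def field_simps)
    moreover have "c * e > 0" using c e by simp
    ultimately have "V T < 0" by linarith
    with Vnn[of T] show False by simp
  qed
  have lim: "((\<lambda>t. diamX N v t) \<longlongrightarrow> 0) at_top"
  proof (rule order_tendstoI)
    fix a :: real assume "a < 0"
    then show "eventually (\<lambda>t. a < diamX N v t) at_top" using Vnn by (simp add: V_def order_less_le_trans)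
  next
    fix e :: real assume e: "0 < e"
    from small[OF e] obtain T where T: "T \<ge> 0" "V T < e" by blast
    show "eventually (\<lambda>t. diamX N v t < e) at_top"
      unfolding eventually_at_top_linorder
      by (intro exI[of _ T] allI impI) (use Vmono[OF T(1)] T in \<open>force simp: V_def\<close>)
  qed
  show ?thesis unfolding flocks_def using bdd lim by simp
qed


lemma diamX_ge:
  fixes f :: "nat \<Rightarrow> real \<Rightarrow> 'a::euclidean_space"
  assumes "i < N" "j < N" shows "norm (f i t - f j t) \<le> diamX N f t"
  unfolding diamX_def
  by (rule cSUP_upper2[where x="(i,j)"]) (use assms in \<open>auto intro!: bdd_above_finite\<close>)

lemma chi_props:
  fixes M :: "nat \<Rightarrow> nat \<Rightarrow> real"
  assumes N2: "N \<ge> 2"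
    and Mnn: "\<And>i j. i<N \<Longrightarrow> j<N \<Longrightarrow> 0 \<le> M i j"
    and scr: "\<And>i j. i<N \<Longrightarrow> j<N \<Longrightarrow> i\<noteq>j \<Longrightarrow> M i j > 0 \<or> M j i > 0 \<or> (\<exists>k<N. M i k > 0 \<and> M j k > 0)"
  shows "chi N M > 0" "\<And>i j. i<N \<Longrightarrow> j<N \<Longrightarrow> i\<noteq>j \<Longrightarrow> chi N M \<le> M i j + M j i + (\<Sum>k\<in>{..<N}-{i,j}. min (M i k) (M j k))"
proof -
  define f where "f i j = M i j + M j i + (\<Sum>k\<in>{..<N}-{i,j}. min (M i k) (M j k))" for i j
  define S where "S = {f i j | i j. i < N \<and> j < N \<and> i \<noteq> j}"
  have chiS: "chi N M = Min S" unfolding chi_def S_def f_def ..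
  have "S \<subseteq> (\<lambda>(i,j). f i j) ` ({..<N} \<times> {..<N})" unfolding S_def by auto
  then have fin: "finite S" by (rule finite_subset) auto
  have "f 0 1 \<in> S" using N2 unfolding S_def by force
  then have ne: "S \<noteq> {}" by auto
  have fpos: "f i j > 0" if ij: "i<N" "j<N" "i\<noteq>j" for i j
  proof -
    have sumnn: "0 \<le> (\<Sum>k\<in>{..<N}-{i,j}. min (M i k) (M j k))" using Mnn ij by (intro sum_nonneg) auto
    have Mij: "0 \<le> M i j" "0 \<le> M j i" using Mnn ij by auto
    from scr[OF ij] show ?thesis
    proof (elim disjE exE conjE)
      assume "M i j > 0" then show ?thesis using sumnn Mij by (simp add: f_def)
    next
      assume "M j i > 0" then show ?thesis using sumnn Mij by (simp add: f_def)
    next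
      fix k assume k: "k < N" "M i k > 0" "M j k > 0"
      show ?thesis
      proof (cases "k = i \<or> k = j")
        case True then show ?thesis using k sumnn Mij by (auto simp: f_def)
      next
        case False
        then have kR: "k \<in> {..<N}-{i,j}" using k by auto
        have "min (M i k) (M j k) \<le> (\<Sum>k\<in>{..<N}-{i,j}. min (M i k) (M j k))"
          by (rule member_le_sum[OF kR]) (use Mnn ij in auto)
        moreover have "min (M i k) (M j k) > 0" using k by simp
        ultimately have "0 < (\<Sum>k\<in>{..<N}-{i,j}. min (M i k) (M j k))" by linarith
        then show ?thesis using Mij unfolding f_def by linarith
      qed
    qed
  qed
  have "Min S \<in> S" using fin ne by (rule Min_in)
  then show "chi N M > 0" unfolding chiS S_def using fpos by auto
  fix i j assume ij: "i<N" "j<N" "i\<noteq>j"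
  have "f i j \<in> S" using ij unfolding S_def by auto
  then show "chi N M \<le> M i j + M j i + (\<Sum>k\<in>{..<N}-{i,j}. min (M i k) (M j k))"
    unfolding chiS f_def[symmetric] using fin by (rule Min_le[rotated])
qed

theorem theorem3p6:
  fixes N :: nat and \<alpha> :: real
    and A :: "nat \<Rightarrow> nat \<Rightarrow> real" and \<psi> :: "real \<Rightarrow> real"
  assumes N_pos: "N \<ge> 1"
    and alpha_pos: "\<alpha> > 0"
    and A_nonneg: "\<And>i j. i < N \<Longrightarrow> j < N \<Longrightarrow> A i j \<ge> 0"
    and psi_mono: "\<And>r1 r2. r1 \<ge> 0 \<Longrightarrow> r2 \<ge> 0 \<Longrightarrow> (r1 - r2) * (\<psi> r1 - \<psi> r2) \<le> 0"
    and psi_pos: "\<And>r. r \<ge> 0 \<Longrightarrow> 0 < \<psi> r \<and> \<psi> r \<le> \<psi> 0"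
    and psi0: "\<psi> 0 \<le> 1"
    and scrambling: "\<And>i j. i < N \<Longrightarrow> j < N \<Longrightarrow> i \<noteq> j \<Longrightarrow>
        A i j > 0 \<or> A j i > 0 \<or> (\<exists>k<N. A i k > 0 \<and> A j k > 0)"
  shows
    "(\<forall>(x :: nat \<Rightarrow> real \<Rightarrow> 'a::euclidean_space) v.
        is_solution N \<alpha> (Q_CS A \<psi> x) x v \<and>
        ennreal (diamX N v 0) < ennreal (\<alpha> * chi N A) * (\<integral>\<^sup>+ r\<in>{diamX N x 0..}. ennreal (\<psi> r) \<partial>lborel)
        \<longrightarrow> flocks N x v)
     \<and>
     (\<forall>(a :: nat \<Rightarrow> real) (x :: nat \<Rightarrow> real \<Rightarrow> 'a) v.
        (\<forall>i<N. a i \<ge> 0) \<and>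
        (\<forall>i<N. (\<forall>j<N. j \<noteq> i \<longrightarrow> A i j = 0) \<longrightarrow> a i > 0) \<and>
        is_solution N \<alpha> (Q_MT N A a \<psi> x) x v \<and>
        ennreal (diamX N v 0) < ennreal (\<alpha> * chi N (B_mat N A a)) * (\<integral>\<^sup>+ r\<in>{diamX N x 0..}. ennreal (\<psi> r) \<partial>lborel)
        \<longrightarrow> flocks N x v)"
proof -
  have anti: "\<psi> r2 \<le> \<psi> r1" if "0 \<le> r1" "r1 \<le> r2" for r1 r2
  proof (rule ccontr)
    assume "\<not> \<psi> r2 \<le> \<psi> r1"
    then have "r1 \<noteq> r2" by auto
    with that \<open>\<not> \<psi> r2 \<le> \<psi> r1\<close> have "(r1 - r2) * (\<psi> r1 - \<psi> r2) > 0" by (intro mult_neg_neg) auto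
    with psi_mono[of r1 r2] that show False by auto
  qed
  have pos: "\<And>r. 0 \<le> r \<Longrightarrow> 0 < \<psi> r" using psi_pos by blast
  show ?thesis
  proof (cases "N = 1")
    case True
    have d0: "diamX N f t = 0" for f :: "nat \<Rightarrow> real \<Rightarrow> 'a" and t
      unfolding diamX_def True by (simp add: lessThan_Suc)
    have fl: "flocks N f g" for f g :: "nat \<Rightarrow> real \<Rightarrow> 'a"
      unfolding flocks_def d0 by (auto simp: bdd_above_def)
    show ?thesis using fl by blast
  next
    case False
    then have N2: "N \<ge> 2" using N_pos by simp
    have CS: "flocks N x v" if sol: "is_solution N \<alpha> (Q_CS A \<psi> x) x v"
      and hyp: "ennreal (diamX N v 0) < ennreal (\<alpha> * chi N A) * (\<integral>\<^sup>+ r\<in>{diamX N x 0..}. ennreal (\<psi> r) \<partial>lborel)"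
      for x v :: "nat \<Rightarrow> real \<Rightarrow> 'a"
    proof (rule core[OF N_pos alpha_pos _ anti pos psi0 _ _ _ sol hyp])
      show "0 < chi N A" using chi_props(1)[OF N2 A_nonneg scrambling] .
      show "chi N A \<le> A i j + A j i + (\<Sum>k\<in>{..<N}-{i,j}. min (A i k) (A j k))" if "i<N" "j<N" "i\<noteq>j" for i j
        using chi_props(2)[OF N2 A_nonneg scrambling that] .
      show "0 \<le> A i j" if "i<N" "j<N" "i\<noteq>j" for i j using A_nonneg that by auto
      show "\<psi> (diamX N x t) * A i j \<le> Q_CS A \<psi> x t i j" if "0 \<le> t" "i<N" "j<N" "i\<noteq>j" for t i j
      proof -
        have "\<psi> (diamX N x t) \<le> \<psi> (norm (x j t - x i t))"
          using diamX_ge[of j N i x t] that by (intro anti) auto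
        then show ?thesis unfolding Q_CS_def using A_nonneg[of i j] that by (simp add: mult.commute mult_left_mono)
      qed
    qed (auto)
    have MT: "flocks N x v" if a0: "\<forall>i<N. a i \<ge> 0" and apos: "\<forall>i<N. (\<forall>j<N. j \<noteq> i \<longrightarrow> A i j = 0) \<longrightarrow> a i > 0"
      and sol: "is_solution N \<alpha> (Q_MT N A a \<psi> x) x v"
      and hyp: "ennreal (diamX N v 0) < ennreal (\<alpha> * chi N (B_mat N A a)) * (\<integral>\<^sup>+ r\<in>{diamX N x 0..}. ennreal (\<psi> r) \<partial>lborel)"
      for a and x v :: "nat \<Rightarrow> real \<Rightarrow> 'a"
    proof -
      define D where "D i = a i + (\<Sum>k\<in>{..<N} - {i}. A i k)" for i
      define D' where "D' t i = a i + (\<Sum>k\<in>{..<N} - {i}. A i k * \<psi> (norm (x i t - x k t)))" for t i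
      have nnt: "0 \<le> A i k * \<psi> (norm (x i t - x k t))" if "i < N" "k < N" for i k t
        using A_nonneg[OF that] pos[of "norm (x i t - x k t)"] by simp
      have D'pos: "D' t i > 0" if i: "i < N" for t i
      proof (cases "\<exists>k<N. k \<noteq> i \<and> A i k > 0")
        case True
        then obtain k where k: "k<N" "k\<noteq>i" "A i k > 0" by blast
        have "A i k * \<psi> (norm (x i t - x k t)) \<le> (\<Sum>k\<in>{..<N} - {i}. A i k * \<psi> (norm (x i t - x k t)))"
          by (rule member_le_sum) (use k nnt i in auto)
        moreover have "A i k * \<psi> (norm (x i t - x k t)) > 0" using k pos by simp
        ultimately show ?thesis using a0 i by (simp add: D'_def) (smt (verit))
      next
        case False
        then have "\<forall>j<N. j \<noteq> i \<longrightarrow> A i j = 0" using A_nonneg i by (metis order_less_le)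
        then have "a i > 0" using apos i by blast
        moreover have "0 \<le> (\<Sum>k\<in>{..<N} - {i}. A i k * \<psi> (norm (x i t - x k t)))"
          using nnt i by (intro sum_nonneg) auto
        ultimately show ?thesis by (simp add: D'_def)
      qed
      have D'D: "D' t i \<le> D i" if i: "i < N" for t i
      proof -
        have "(\<Sum>k\<in>{..<N} - {i}. A i k * \<psi> (norm (x i t - x k t))) \<le> (\<Sum>k\<in>{..<N} - {i}. A i k * 1)"
        proof (rule sum_mono)
          fix k assume "k \<in> {..<N} - {i}"
          moreover have "\<psi> (norm (x i t - x k t)) \<le> 1" using anti[of 0 "norm (x i t - x k t)"] psi0 by auto
          ultimately show "A i k * \<psi> (norm (x i t - x k t)) \<le> A i k * 1" using A_nonneg i by (intro mult_left_mono) auto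
        qed
        then show ?thesis by (simp add: D_def D'_def)
      qed
      have Dpos: "D i > 0" if "i < N" for i using D'pos[OF that, of 0] D'D[OF that, of 0] by simp
      have B: "B_mat N A a i j = A i j / D i" for i j by (simp add: B_mat_def D_def)
      have Bnn: "0 \<le> B_mat N A a i j" if "i<N" "j<N" for i j
        unfolding B using A_nonneg[OF that] Dpos[OF that(1)] by simp
      have Bpos: "B_mat N A a i j > 0 \<longleftrightarrow> A i j > 0" if "i<N" "j<N" for i j
        unfolding B using Dpos[OF that(1)] by (simp add: zero_less_divide_iff)
      have scrB: "B_mat N A a i j > 0 \<or> B_mat N A a j i > 0 \<or> (\<exists>k<N. B_mat N A a i k > 0 \<and> B_mat N A a j k > 0)"
        if "i<N" "j<N" "i\<noteq>j" for i j
        using scrambling[OF that] Bpos that by blast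
      show ?thesis
      proof (rule core[OF N_pos alpha_pos _ anti pos psi0 _ _ _ sol hyp])
        show "0 < chi N (B_mat N A a)" using chi_props(1)[OF N2 Bnn scrB] .
        show "chi N (B_mat N A a) \<le> B_mat N A a i j + B_mat N A a j i + (\<Sum>k\<in>{..<N}-{i,j}. min (B_mat N A a i k) (B_mat N A a j k))"
          if "i<N" "j<N" "i\<noteq>j" for i j
          using chi_props(2)[OF N2 Bnn scrB that] .
        show "0 \<le> B_mat N A a i j" if "i<N" "j<N" "i\<noteq>j" for i j using Bnn that by auto
        show "\<psi> (diamX N x t) * B_mat N A a i j \<le> Q_MT N A a \<psi> x t i j" if "0 \<le> t" "i<N" "j<N" "i\<noteq>j" for t i j
        proof -
          have ps: "\<psi> (diamX N x t) \<le> \<psi> (norm (x i t - x j t))"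
            using diamX_ge[of i N j x t] that by (intro anti) auto
          have Aij: "0 \<le> A i j" using A_nonneg that by auto
          have "\<psi> (diamX N x t) * B_mat N A a i j = A i j * \<psi> (diamX N x t) / D i" by (simp add: B)
          also have "\<dots> \<le> A i j * \<psi> (norm (x i t - x j t)) / D i"
            using ps Aij Dpos[OF that(2)] by (intro divide_right_mono mult_left_mono) auto
          also have "\<dots> \<le> A i j * \<psi> (norm (x i t - x j t)) / D' t i"
            using D'pos[OF that(2), of t] D'D[OF that(2), of t] Aij pos[of "norm (x i t - x j t)"]
            by (intro divide_left_mono) (auto intro: mult_pos_pos)
          also have "\<dots> = Q_MT N A a \<psi> x t i j" by (simp add: Q_MT_def D'_def)
          finally show ?thesis .
        qed
      qed (auto)
    qed
    show ?thesis using CS MT by blast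
  qed
qed


end
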